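(* Let $X$ be a well-filtered space such that its Smyth power space $P_S(X)$ is first-countable. Then the upper Vietoris topology and the Scott topology on $\mathsf{K}(X)$ coincide.
   Context: All spaces are $T_0$; the specialization order is $x\le y$ iff $x\in\overline{\{y\}}$, and saturated sets are the upper sets in this order. $\mathsf{K}(X)$ is the set of nonempty compact saturated subsets of $X$ ordered by reverse inclusion; a family in $\mathsf{K}(X)$ has a supremum iff its intersection lies in $\mathsf{K}(X)$, and then the supremum is the intersection. The Scott topology on a poset $Q$ consists of upper sets $U$ such that every directed $D$ whose supremum exists and lies in $U$ meets $U$. For open $U\subseteq X$, $\Box U=\{K\in\mathsf{K}(X):K\subseteq U\}$; the upper Vietoris topology on $\mathsf{K}(X)$ has base $\{\Box U: U\text{ open}\}$, and the resulting space is the Smyth power space $P_S(X)$. $X$ is well-filtered if for every open $U$ and every family $\mathcal K\subseteq\mathsf{K}(X)$ filtered under inclusion, $\bigcap\mathcal K\subseteq U$ implies $K\subseteq U$ for some $K\in\mathcal K$. *)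

theory Defs
  imports "HOL-Analysis.Analysis"
begin

definition spec_le :: "'a topology \<Rightarrow> 'a \<Rightarrow> 'a \<Rightarrow> bool" where
  "spec_le X x y \<longleftrightarrow> x \<in> topspace X \<and> y \<in> topspace X \<and> x \<in> X closure_of {y}"

definition saturated :: "'a topology \<Rightarrow> 'a set \<Rightarrow> bool" where
  "saturated X A \<longleftrightarrow> A \<subseteq> topspace X \<and>
     (\<forall>x\<in>A. \<forall>y\<in>topspace X. spec_le X x y \<longrightarrow> y \<in> A)"

definition Kset :: "'a topology \<Rightarrow> 'a set set" where
  "Kset X = {K. K \<noteq> {} \<and> compactin X K \<and> saturated X K}"

definition box :: "'a topology \<Rightarrow> 'a set \<Rightarrow> 'a set set" where
  "box X U = {K \<in> Kset X. K \<subseteq> U}"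

definition smyth_power :: "'a topology \<Rightarrow> 'a set topology" where
  "smyth_power X = topology_generated_by {box X U | U. openin X U}"

definition well_filtered :: "'a topology \<Rightarrow> bool" where
  "well_filtered X \<longleftrightarrow>
     (\<forall>U \<KK>. openin X U \<and> \<KK> \<subseteq> Kset X \<and> \<KK> \<noteq> {} \<and>
        (\<forall>A\<in>\<KK>. \<forall>B\<in>\<KK>. \<exists>C\<in>\<KK>. C \<subseteq> A \<and> C \<subseteq> B) \<and>
        \<Inter>\<KK> \<subseteq> U \<longrightarrow> (\<exists>K\<in>\<KK>. K \<subseteq> U))"

definition directed_in :: "('b \<Rightarrow> 'b \<Rightarrow> bool) \<Rightarrow> 'b set \<Rightarrow> bool" where
  "directed_in le D \<longleftrightarrow> D \<noteq> {} \<and> (\<forall>a\<in>D. \<forall>b\<in>D. \<exists>c\<in>D. le a c \<and> le b c)"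

definition is_sup_in :: "'b set \<Rightarrow> ('b \<Rightarrow> 'b \<Rightarrow> bool) \<Rightarrow> 'b set \<Rightarrow> 'b \<Rightarrow> bool" where
  "is_sup_in P le D s \<longleftrightarrow> s \<in> P \<and> (\<forall>d\<in>D. le d s) \<and>
     (\<forall>u\<in>P. (\<forall>d\<in>D. le d u) \<longrightarrow> le s u)"

definition scott_open :: "'b set \<Rightarrow> ('b \<Rightarrow> 'b \<Rightarrow> bool) \<Rightarrow> 'b set \<Rightarrow> bool" where
  "scott_open P le U \<longleftrightarrow> U \<subseteq> P \<and>
     (\<forall>x\<in>U. \<forall>y\<in>P. le x y \<longrightarrow> y \<in> U) \<and>
     (\<forall>D s. D \<subseteq> P \<and> directed_in le D \<and> is_sup_in P le D s \<and> s \<in> U \<longrightarrow> D \<inter> U \<noteq> {})"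

definition scott_topology :: "'b set \<Rightarrow> ('b \<Rightarrow> 'b \<Rightarrow> bool) \<Rightarrow> 'b topology" where
  "scott_topology P le = topology (scott_open P le)"

end

theory Submission imports Defs begin
lemma open_upper:
  assumes "openin X B" "x \<in> B" "spec_le X x y" shows "y \<in> B"
  using assms unfolding spec_le_def in_closure_of by auto

lemma spec_le_iff:
  "spec_le X x y \<longleftrightarrow> x \<in> topspace X \<and> y \<in> topspace X \<and> (\<forall>T. openin X T \<and> x \<in> T \<longrightarrow> y \<in> T)"
  unfolding spec_le_def in_closure_of by auto

definition upx :: "'a topology \<Rightarrow> 'a \<Rightarrow> 'a set" where
  "upx X x = {y \<in> topspace X. spec_le X x y}"

lemma upx_in: assumes "x \<in> topspace X" shows "x \<in> upx X x"
  using assms by (auto simp: upx_def spec_le_iff)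

lemma upx_sub: assumes "openin X B" "x \<in> B" shows "upx X x \<subseteq> B"
  using assms open_upper by (auto simp: upx_def)

lemma upx_K: assumes "x \<in> topspace X" shows "upx X x \<in> Kset X"
proof -
  have c: "compactin X (upx X x)"
    unfolding compactin_def
  proof (intro conjI allI impI)
    show "upx X x \<subseteq> topspace X" by (auto simp: upx_def)
    fix U assume h: "(\<forall>B\<in>U. openin X B) \<and> upx X x \<subseteq> \<Union>U"
    then obtain B where "B \<in> U" "x \<in> B" using upx_in[OF assms] by blast
    then show "\<exists>F. finite F \<and> F \<subseteq> U \<and> upx X x \<subseteq> \<Union>F"
      using h upx_sub[of X B x] by (intro exI[of _ "{B}"]) auto
  qed
  have s: "saturated X (upx X x)"
    unfolding saturated_def upx_def spec_le_iff by auto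
  show ?thesis using c s upx_in[OF assms] by (auto simp: Kset_def)
qed

lemma open_sub_of_box:
  assumes "openin X W" "openin X Ob" "box X W \<subseteq> box X Ob" shows "W \<subseteq> Ob"
proof
  fix x assume x: "x \<in> W"
  hence xt: "x \<in> topspace X" using assms openin_subset by blast
  have "upx X x \<in> box X W" using upx_K[OF xt] upx_sub[OF assms(1) x] by (auto simp: box_def)
  hence "upx X x \<subseteq> Ob" using assms(3) by (auto simp: box_def)
  thus "x \<in> Ob" using upx_in[OF xt] by auto
qed

lemma scott_sub: "scott_open P le U \<Longrightarrow> U \<subseteq> P"
  by (simp add: scott_open_def)
lemma scott_up: "scott_open P le U \<Longrightarrow> x \<in> U \<Longrightarrow> y \<in> P \<Longrightarrow> le x y \<Longrightarrow> y \<in> U"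
  unfolding scott_open_def by blast
lemma scott_dir: "scott_open P le U \<Longrightarrow> D \<subseteq> P \<Longrightarrow> directed_in le D \<Longrightarrow> is_sup_in P le D s \<Longrightarrow> s \<in> U \<Longrightarrow> D \<inter> U \<noteq> {}"
  unfolding scott_open_def by blast
lemma wf_apply:
  assumes "well_filtered X" "openin X U" "D \<subseteq> Kset X" "D \<noteq> {}"
    "\<forall>A\<in>D. \<forall>B\<in>D. \<exists>C\<in>D. C \<subseteq> A \<and> C \<subseteq> B" "\<Inter>D \<subseteq> U"
  shows "\<exists>K\<in>D. K \<subseteq> U"
  using assms unfolding well_filtered_def by blast

lemma scott_int:
  assumes S: "scott_open P le S" and T: "scott_open P le T"
  shows "scott_open P le (S \<inter> T)"
  unfolding scott_open_def
proof (intro conjI allI impI)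
  show "S \<inter> T \<subseteq> P" using scott_sub[OF S] by blast
  show "\<forall>x\<in>S \<inter> T. \<forall>y\<in>P. le x y \<longrightarrow> y \<in> S \<inter> T"
  proof (intro ballI impI)
    fix x y assume "x \<in> S \<inter> T" "y \<in> P" "le x y"
    thus "y \<in> S \<inter> T" using scott_up[OF S, of x y] scott_up[OF T, of x y] by blast
  qed
  fix D s assume h: "D \<subseteq> P \<and> directed_in le D \<and> is_sup_in P le D s \<and> s \<in> S \<inter> T"
  have h1: "D \<subseteq> P" and h2: "directed_in le D" and h3: "is_sup_in P le D s"
    and h4: "s \<in> S" and h5: "s \<in> T" using h by auto
  have "D \<inter> S \<noteq> {}" by (rule scott_dir[OF S h1 h2 h3 h4])
  then obtain a where a: "a \<in> D" "a \<in> S" by blast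
  have "D \<inter> T \<noteq> {}" by (rule scott_dir[OF T h1 h2 h3 h5])
  then obtain b where b: "b \<in> D" "b \<in> T" by blast
  obtain c where c: "c \<in> D" "le a c" "le b c" using h2 a(1) b(1) unfolding directed_in_def by blast
  have cP: "c \<in> P" using c(1) h1 by blast
  have "c \<in> S" using scott_up[OF S a(2) cP c(2)] .
  moreover have "c \<in> T" using scott_up[OF T b(2) cP c(3)] .
  ultimately show "D \<inter> (S \<inter> T) \<noteq> {}" using c by blast
qed

lemma scott_Un:
  assumes K: "\<And>S. S \<in> K \<Longrightarrow> scott_open P le S"
  shows "scott_open P le (\<Union>K)"
  unfolding scott_open_def
proof (intro conjI allI impI)
  show "\<Union>K \<subseteq> P" using K scott_sub by blast
  show "\<forall>x\<in>\<Union>K. \<forall>y\<in>P. le x y \<longrightarrow> y \<in> \<Union>K"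
  proof (intro ballI impI)
    fix x y assume "x \<in> \<Union>K" "y \<in> P" "le x y"
    then obtain S where "S \<in> K" "x \<in> S" by blast
    thus "y \<in> \<Union>K" using scott_up[OF K, of S x y] \<open>y \<in> P\<close> \<open>le x y\<close> by blast
  qed
  fix D s assume h: "D \<subseteq> P \<and> directed_in le D \<and> is_sup_in P le D s \<and> s \<in> \<Union>K"
  then obtain S where S: "S \<in> K" "s \<in> S" by blast
  have "D \<inter> S \<noteq> {}" using scott_dir[OF K[OF S(1)], of D s] h S(2) by blast
  then show "D \<inter> \<Union>K \<noteq> {}" using S(1) by blast
qed

lemma istop_scott: "istopology (scott_open P le)"
  unfolding istopology_def using scott_int scott_Un by blast

lemma wf_inter:
  assumes wf: "well_filtered X" and D: "D \<subseteq> Kset X" "D \<noteq> {}"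
    and fil: "\<forall>A\<in>D. \<forall>B\<in>D. \<exists>C\<in>D. C \<subseteq> A \<and> C \<subseteq> B"
  shows "\<Inter>D \<in> Kset X"
proof -
  obtain K0 where K0: "K0 \<in> D" using D by blast
  have K0t: "K0 \<subseteq> topspace X" using K0 D by (auto simp: Kset_def compactin_def)
  have ne: "\<Inter>D \<noteq> {}"
  proof
    assume "\<Inter>D = {}"
    then obtain K where "K \<in> D" "K \<subseteq> {}" using wf_apply[OF wf openin_empty D fil] by auto
    thus False using D by (auto simp: Kset_def)
  qed
  have c: "compactin X (\<Inter>D)"
    unfolding compactin_def
  proof (intro conjI allI impI)
    show "\<Inter>D \<subseteq> topspace X" using K0 K0t by blast
    fix U assume h: "(\<forall>B\<in>U. openin X B) \<and> \<Inter>D \<subseteq> \<Union>U"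
    hence "openin X (\<Union>U)" by auto
    then obtain K where K: "K \<in> D" "K \<subseteq> \<Union>U" using wf_apply[OF wf _ D fil] h by blast
    hence "compactin X K" using D by (auto simp: Kset_def)
    then obtain F where "finite F" "F \<subseteq> U" "K \<subseteq> \<Union>F" using K h unfolding compactin_def by blast
    thus "\<exists>F. finite F \<and> F \<subseteq> U \<and> \<Inter>D \<subseteq> \<Union>F" using K by blast
  qed
  have s: "saturated X (\<Inter>D)"
    using D K0 K0t unfolding saturated_def Kset_def by blast
  show ?thesis using ne c s by (simp add: Kset_def)
qed

lemma smyth_top: "topspace (smyth_power X) = Kset X"
proof -
  have "box X (topspace X) = Kset X" by (auto simp: box_def Kset_def compactin_def)
  thus ?thesis unfolding smyth_power_def topology_generated_by_topspace box_def
    by auto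
qed

lemma box_open: "openin X U \<Longrightarrow> openin (smyth_power X) (box X U)"
  unfolding smyth_power_def by (rule topology_generated_by_Basis) auto

lemma smyth_nbhd0:
  assumes g: "generate_topology_on {box X U | U. openin X U} B"
  shows "\<forall>L\<in>B. \<exists>U. openin X U \<and> L \<in> box X U \<and> box X U \<subseteq> B"
  using g
proof (induction rule: generate_topology_on.induct)
  case Empty then show ?case by simp
next
  case (Int a b)
  show ?case
  proof
    fix L assume L: "L \<in> a \<inter> b"
    obtain U1 where U1: "openin X U1" "L \<in> box X U1" "box X U1 \<subseteq> a" using Int.IH(1) L by blast
    obtain U2 where U2: "openin X U2" "L \<in> box X U2" "box X U2 \<subseteq> b" using Int.IH(2) L by blast
    have "openin X (U1 \<inter> U2)" using U1(1) U2(1) by blast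
    moreover have "L \<in> box X (U1 \<inter> U2)" using U1(2) U2(2) by (auto simp: box_def)
    moreover have "box X (U1 \<inter> U2) \<subseteq> a \<inter> b" using U1(3) U2(3) by (auto simp: box_def)
    ultimately show "\<exists>U. openin X U \<and> L \<in> box X U \<and> box X U \<subseteq> a \<inter> b" by blast
  qed
next
  case (UN F)
  show ?case
  proof
    fix L assume "L \<in> \<Union>F"
    then obtain k where k: "k \<in> F" "L \<in> k" by blast
    then obtain U where "openin X U" "L \<in> box X U" "box X U \<subseteq> k" using UN.IH by blast
    thus "\<exists>U. openin X U \<and> L \<in> box X U \<and> box X U \<subseteq> \<Union>F" using k(1) by blast
  qed
next
  case (Basis s)
  then obtain U where "s = box X U" "openin X U" by blast
  thus ?case by blast
qed

lemma smyth_nbhd: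
  assumes "openin (smyth_power X) B" "K \<in> B"
  shows "\<exists>U. openin X U \<and> K \<in> box X U \<and> box X U \<subseteq> B"
proof -
  have g: "generate_topology_on {box X U | U. openin X U} B"
    using assms(1) unfolding smyth_power_def by (rule openin_topology_generated_by)
  show ?thesis using smyth_nbhd0[OF g] assms(2) by blast
qed

lemma box_scott:
  assumes wf: "well_filtered X" and U: "openin X U"
  shows "scott_open (Kset X) (\<lambda>A B. B \<subseteq> A) (box X U)"
  unfolding scott_open_def
proof (intro conjI allI impI)
  show "box X U \<subseteq> Kset X" by (auto simp: box_def)
  show "\<forall>x\<in>box X U. \<forall>y\<in>Kset X. y \<subseteq> x \<longrightarrow> y \<in> box X U" by (auto simp: box_def)
  fix D s assume h: "D \<subseteq> Kset X \<and> directed_in (\<lambda>A B. B \<subseteq> A) D \<and> is_sup_in (Kset X) (\<lambda>A B. B \<subseteq> A) D s \<and> s \<in> box X U"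
  have ne: "D \<noteq> {}" and fil: "\<forall>A\<in>D. \<forall>B\<in>D. \<exists>C\<in>D. C \<subseteq> A \<and> C \<subseteq> B"
    using h unfolding directed_in_def by auto
  have I: "\<Inter>D \<in> Kset X" using wf_inter[OF wf _ ne fil] h by blast
  have "\<Inter>D \<subseteq> s" using h I unfolding is_sup_in_def by blast
  hence "\<Inter>D \<subseteq> U" using h by (auto simp: box_def)
  then obtain K where "K \<in> D" "K \<subseteq> U" using wf h ne fil U unfolding well_filtered_def by metis
  thus "D \<inter> box X U \<noteq> {}" using h by (auto simp: box_def)
qed


lemma KsetD: "K \<in> Kset X \<Longrightarrow> K \<noteq> {} \<and> compactin X K \<and> saturated X K \<and> K \<subseteq> topspace X"
  by (auto simp: Kset_def compactin_def)

lemma compact_cover: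
  assumes "compactin X K" "\<And>B. B \<in> U \<Longrightarrow> openin X B" "K \<subseteq> \<Union>U"
  shows "\<exists>F. finite F \<and> F \<subseteq> U \<and> K \<subseteq> \<Union>F"
  using assms unfolding compactin_def by blast

lemma saturated_Un:
  assumes "saturated X A" "\<And>S. S \<in> F \<Longrightarrow> saturated X S"
  shows "saturated X (A \<union> \<Union>F)"
proof -
  have "A \<union> \<Union>F \<subseteq> topspace X" using assms unfolding saturated_def by blast
  moreover have "\<forall>x\<in>A \<union> \<Union>F. \<forall>y\<in>topspace X. spec_le X x y \<longrightarrow> y \<in> A \<union> \<Union>F"
  proof (intro ballI impI)
    fix x y assume x: "x \<in> A \<union> \<Union>F" and y: "y \<in> topspace X" and le: "spec_le X x y"
    show "y \<in> A \<union> \<Union>F"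
    proof (cases "x \<in> A")
      case True thus ?thesis using assms(1) y le unfolding saturated_def by blast
    next
      case False
      then obtain S where "S \<in> F" "x \<in> S" using x by blast
      thus ?thesis using assms(2)[of S] y le unfolding saturated_def by blast
    qed
  qed
  ultimately show ?thesis unfolding saturated_def by blast
qed

lemma fc_base:
  assumes "first_countable T" "x \<in> topspace T"
  obtains \<B> where "countable \<B>" "\<And>V. V \<in> \<B> \<Longrightarrow> openin T V"
    "\<And>U. openin T U \<Longrightarrow> x \<in> U \<Longrightarrow> (\<exists>V \<in> \<B>. x \<in> V \<and> V \<subseteq> U)"
proof -
  have "\<exists>\<B>. countable \<B> \<and> (\<forall>V \<in> \<B>. openin T V) \<and>
             (\<forall>U. openin T U \<and> x \<in> U \<longrightarrow> (\<exists>V \<in> \<B>. x \<in> V \<and> V \<subseteq> U))"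
    using assms unfolding first_countable_def by (rule bspec)
  then obtain \<B> where a: "countable \<B>" and b: "\<forall>V \<in> \<B>. openin T V"
    and c: "\<forall>U. openin T U \<and> x \<in> U \<longrightarrow> (\<exists>V \<in> \<B>. x \<in> V \<and> V \<subseteq> U)"
    by (elim exE conjE)
  show ?thesis
  proof (rule that[OF a])
    show "\<And>V. V \<in> \<B> \<Longrightarrow> openin T V" using b by (rule bspec)
    show "\<And>U. openin T U \<Longrightarrow> x \<in> U \<Longrightarrow> (\<exists>V \<in> \<B>. x \<in> V \<and> V \<subseteq> U)"
      using c by blast
  qed
qed

lemma key:
  assumes fc: "first_countable (smyth_power X)"
    and V: "scott_open (Kset X) (\<lambda>A B. B \<subseteq> A) V" and KV: "K \<in> V"
  shows "\<exists>U. openin X U \<and> K \<subseteq> U \<and> box X U \<subseteq> V"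
proof (rule ccontr)
  assume nex: "\<not> ?thesis"
  have KK: "K \<in> Kset X" using scott_sub[OF V] KV by blast
  have Kt: "K \<subseteq> topspace X" and Kne: "K \<noteq> {}" and Ksat: "saturated X K"
    and Kc: "compactin X K" using KsetD[OF KK] by auto
  have Ktop: "K \<in> topspace (smyth_power X)" using KK smyth_top by blast
  obtain \<B> where cB: "countable \<B>" and oB: "\<And>V. V \<in> \<B> \<Longrightarrow> openin (smyth_power X) V"
    and bB: "\<And>U. openin (smyth_power X) U \<Longrightarrow> K \<in> U \<Longrightarrow> (\<exists>V \<in> \<B>. K \<in> V \<and> V \<subseteq> U)"
    using fc_base[OF fc Ktop] by blast
  have Kbt: "K \<in> box X (topspace X)" using KK Kt by (auto simp: box_def)
  have "\<B> \<noteq> {}" using bB[OF box_open[OF openin_topspace[of X]] Kbt] by blast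
  define b where "b = from_nat_into \<B>"
  have bin: "b n \<in> \<B>" for n using \<open>\<B> \<noteq> {}\<close> from_nat_into unfolding b_def by metis
  have "\<exists>U. K \<in> b n \<longrightarrow> openin X U \<and> K \<in> box X U \<and> box X U \<subseteq> b n" for n
  proof (cases "K \<in> b n")
    case True
    then show ?thesis using smyth_nbhd[OF oB[OF bin[of n]] True] by blast
  qed simp
  then obtain U where U: "\<And>n. K \<in> b n \<Longrightarrow> openin X (U n) \<and> K \<in> box X (U n) \<and> box X (U n) \<subseteq> b n"
    by metis
  define U' where "U' n = (if K \<in> b n then U n else topspace X)" for n
  have U'o: "openin X (U' n)" for n
    using U[of n] unfolding U'_def by auto
  have KU': "K \<subseteq> U' n" for n
    using U[of n] Kt unfolding U'_def box_def by auto
  define W where "W n = \<Inter>(U' ` {..n})" for n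
  have Wo: "openin X (W n)" for n unfolding W_def using U'o by (intro openin_Inter) auto
  have KW: "K \<subseteq> W n" for n unfolding W_def using KU' by auto
  have Wmono: "n \<le> m \<Longrightarrow> W m \<subseteq> W n" for n m unfolding W_def by auto
  have Wbase: "\<exists>N. W N \<subseteq> Ob" if oOb: "openin X Ob" and KOb: "K \<subseteq> Ob" for Ob
  proof -
    have "K \<in> box X Ob" using KK KOb by (auto simp: box_def)
    then obtain B where "B \<in> \<B>" "K \<in> B" "B \<subseteq> box X Ob"
      using bB[OF box_open[OF oOb]] by blast
    then obtain N where N: "b N = B" using from_nat_into_surj[OF cB] unfolding b_def by metis
    have "box X (W N) \<subseteq> box X (U' N)" unfolding W_def box_def by auto
    also have "\<dots> \<subseteq> b N" using U[of N] \<open>K \<in> B\<close> N unfolding U'_def by auto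
    finally have "box X (W N) \<subseteq> box X Ob" using N \<open>B \<subseteq> box X Ob\<close> by auto
    thus ?thesis using open_sub_of_box[OF Wo oOb] by blast
  qed
  have "\<exists>L. L \<in> box X (W n) \<and> L \<notin> V" for n
    using nex Wo[of n] KW[of n] by blast
  then obtain Kn where Kn: "\<And>n. Kn n \<in> box X (W n)" "\<And>n. Kn n \<notin> V" by metis
  have KnK: "Kn n \<in> Kset X" and KnW: "Kn n \<subseteq> W n" for n using Kn(1)[of n] by (auto simp: box_def)
  define L where "L n = K \<union> \<Union>(Kn ` {n..})" for n
  have Lt: "L n \<subseteq> topspace X" for n
    using Kt KsetD[OF KnK] unfolding L_def by blast
  have LK: "L n \<in> Kset X" for n
  proof -
    have c: "compactin X (L n)"
      unfolding compactin_def
    proof (intro conjI allI impI)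
      show "L n \<subseteq> topspace X" by (rule Lt)
      fix \<U> assume h: "(\<forall>B\<in>\<U>. openin X B) \<and> L n \<subseteq> \<Union>\<U>"
      have hU: "\<And>B. B \<in> \<U> \<Longrightarrow> openin X B" using h by blast
      have KL: "K \<subseteq> L n" unfolding L_def by (rule Un_upper1)
      have KU: "K \<subseteq> \<Union>\<U>" using h KL by (meson subset_trans)
      have "\<exists>F. finite F \<and> F \<subseteq> \<U> \<and> K \<subseteq> \<Union>F" by (rule compact_cover[OF Kc hU KU])
      then obtain F0 where F0: "finite F0" "F0 \<subseteq> \<U>" "K \<subseteq> \<Union>F0"
        by (elim exE conjE)
      have oF0: "openin X (\<Union>F0)"
      proof (rule openin_Union)
        fix S assume "S \<in> F0" thus "openin X S" using F0(2) hU by blast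
      qed
      obtain N where N: "W N \<subseteq> \<Union>F0" using Wbase[OF oF0 F0(3)] by (elim exE)
      have "\<exists>F. finite F \<and> F \<subseteq> \<U> \<and> Kn m \<subseteq> \<Union>F" if m: "m \<in> {n..<N}" for m
      proof -
        have "Kn m \<subseteq> L n" using m unfolding L_def by auto
        hence "Kn m \<subseteq> \<Union>\<U>" using h by (meson subset_trans)
        thus ?thesis using compact_cover[OF _ hU] KsetD[OF KnK[of m]] by blast
      qed
      then obtain G where G: "\<And>m. m \<in> {n..<N} \<Longrightarrow> finite (G m) \<and> G m \<subseteq> \<U> \<and> Kn m \<subseteq> \<Union>(G m)"
        by metis
      define F where "F = F0 \<union> \<Union>(G ` {n..<N})"
      have "finite F" unfolding F_def using F0(1) G by auto
      moreover have "F \<subseteq> \<U>" unfolding F_def using F0(2) G by blast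
      moreover have "L n \<subseteq> \<Union>F"
      proof
        fix x assume "x \<in> L n"
        then consider "x \<in> K" | m where "m \<ge> n" "x \<in> Kn m" unfolding L_def by auto
        thus "x \<in> \<Union>F"
        proof cases
          case 1 thus ?thesis using F0(3) unfolding F_def by auto
        next
          case (2 m)
          show ?thesis
          proof (cases "m < N")
            case True
            hence "x \<in> \<Union>(G m)" using G[of m] 2 by auto
            thus ?thesis using True 2 unfolding F_def by auto
          next
            case False
            hence "x \<in> W N" using KnW[of m] Wmono[of N m] 2 by auto
            thus ?thesis using N unfolding F_def by auto
          qed
        qed
      qed
      ultimately show "\<exists>F. finite F \<and> F \<subseteq> \<U> \<and> L n \<subseteq> \<Union>F" by blast
    qed
    have s: "saturated X (L n)"
      unfolding L_def by (rule saturated_Un[OF Ksat]) (use KsetD[OF KnK] in blast)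
    show ?thesis using c s Kne unfolding Kset_def L_def by auto
  qed
  have Lmono: "n \<le> m \<Longrightarrow> L m \<subseteq> L n" for n m unfolding L_def by auto
  have Linter: "\<Inter>(range L) \<subseteq> K"
  proof
    fix x assume x: "x \<in> \<Inter>(range L)"
    show "x \<in> K"
    proof (rule ccontr)
      assume xK: "x \<notin> K"
      have "x \<in> L 0" using x by blast
      hence xt: "x \<in> topspace X" using Lt by blast
      define Ob where "Ob = topspace X - X closure_of {x}"
      have oO: "openin X Ob" unfolding Ob_def by auto
      have "K \<subseteq> Ob"
      proof
        fix k assume k: "k \<in> K"
        have "k \<notin> X closure_of {x}"
        proof
          assume "k \<in> X closure_of {x}"
          hence "spec_le X k x" using k Kt xt unfolding spec_le_def by auto
          thus False using Ksat k xt xK unfolding saturated_def by blast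
        qed
        thus "k \<in> Ob" using k Kt unfolding Ob_def by auto
      qed
      then obtain N where N: "W N \<subseteq> Ob" using Wbase oO by blast
      have "x \<in> L N" using x by auto
      then obtain m where "m \<ge> N" "x \<in> Kn m" using xK unfolding L_def by auto
      hence "x \<in> Ob" using KnW[of m] Wmono[of N m] N by auto
      moreover have "x \<in> X closure_of {x}" using xt closure_of_subset[of "{x}" X] by auto
      ultimately show False unfolding Ob_def by auto
    qed
  qed
  have dir: "directed_in (\<lambda>A B. B \<subseteq> A) (range L)"
    unfolding directed_in_def
  proof (intro conjI ballI)
    show "range L \<noteq> {}" by auto
    fix a b assume "a \<in> range L" "b \<in> range L"
    then obtain i j where "a = L i" "b = L j" by auto
    thus "\<exists>c\<in>range L. c \<subseteq> a \<and> c \<subseteq> b"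
      using Lmono[of i "max i j"] Lmono[of j "max i j"] by auto
  qed
  have sup: "is_sup_in (Kset X) (\<lambda>A B. B \<subseteq> A) (range L) K"
    unfolding is_sup_in_def
  proof (intro conjI ballI impI)
    show "K \<in> Kset X" by (rule KK)
    fix d assume "d \<in> range L" thus "K \<subseteq> d" unfolding L_def by auto
  next
    fix u assume "u \<in> Kset X" "\<forall>d\<in>range L. u \<subseteq> d"
    thus "u \<subseteq> K" using Linter by blast
  qed
  have sub: "range L \<subseteq> Kset X" using LK by blast
  have "range L \<inter> V \<noteq> {}" by (rule scott_dir[OF V sub dir sup KV])
  then obtain n where Ln: "L n \<in> V" by auto
  have "Kn n \<subseteq> L n" unfolding L_def by auto
  hence "Kn n \<in> V" using scott_up[OF V Ln KnK[of n]] by blast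
  thus False using Kn(2) by blast
qed

theorem mainTheorem2:
  fixes X :: "'a topology"
  assumes "t0_space X"
    and "well_filtered X"
    and "first_countable (smyth_power X)"
  shows "smyth_power X = scott_topology (Kset X) (\<lambda>A B. B \<subseteq> A)"
proof -
  let ?P = "Kset X" and ?le = "\<lambda>A B::'a set. B \<subseteq> A"
  have o: "openin (scott_topology ?P ?le) = scott_open ?P ?le"
    unfolding scott_topology_def by (rule topology_inverse'[OF istop_scott])
  show ?thesis unfolding topology_eq
  proof (intro allI iffI)
    fix S assume "openin (smyth_power X) S"
    hence g: "generate_topology_on {box X U | U. openin X U} S"
      unfolding smyth_power_def by (rule openin_topology_generated_by)
    have "scott_open ?P ?le S"
      by (rule generate_topology_on_coarsest[OF istop_scott _ g]) (use box_scott[OF assms(2)] in blast)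
    thus "openin (scott_topology ?P ?le) S" using o by simp
  next
    fix S assume "openin (scott_topology ?P ?le) S"
    hence V: "scott_open ?P ?le S" using o by simp
    have "S = \<Union>{box X U | U. openin X U \<and> box X U \<subseteq> S}"
    proof
      show "S \<subseteq> \<Union>{box X U | U. openin X U \<and> box X U \<subseteq> S}"
      proof
        fix K assume KV: "K \<in> S"
        then obtain U where "openin X U" "K \<subseteq> U" "box X U \<subseteq> S" using key[OF assms(3) V] by blast
        moreover have "K \<in> Kset X" using V KV unfolding scott_open_def by blast
        ultimately show "K \<in> \<Union>{box X U | U. openin X U \<and> box X U \<subseteq> S}"
          by (auto simp: box_def)
      qed
    qed blast
    moreover have "openin (smyth_power X) (\<Union>{box X U | U. openin X U \<and> box X U \<subseteq> S})"
      using box_open by (intro openin_Union) blast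
    ultimately show "openin (smyth_power X) S" by simp
  qed
qed

end
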